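(* Let $\mathbb{K}$ be a field of characteristic $0$, $\alpha,\gamma\in\mathbb{K}$, $A=A(\alpha,0,\gamma)$, and let $T_1$ be a one-dimensional right $A$-module and $T_2$ a one-dimensional left $A$-module. Then: (i) if $\gamma\neq0$ and $\alpha=1$, then $\mathrm{Tor}_1^A(T_1,T_2)=0$; (ii) if $\gamma\neq0$ and $\alpha\neq1$, then $\dim_{\mathbb{K}}\mathrm{Tor}_1^A(T_1,T_2)\le1$; (iii) if $\gamma=0$, then $\dim_{\mathbb{K}}\mathrm{Tor}_1^A(T_1,T_2)\le2$ and $\dim_{\mathbb{K}}\mathrm{Tor}_1^A(\mathbb{K},\mathbb{K})=2$, where $\mathbb{K}$ is the trivial module; moreover, if $\alpha\neq1$ and $T$ is a one-dimensional module with $T\not\cong\mathbb{K}$ (i.e. $d,u$ do not both act by $0$), then $\dim_{\mathbb{K}}\mathrm{Tor}_1^A(T,T)=1$, where $T$ is regarded both as a right and as a left module via the same scalars.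
   Context: For $(\alpha,\beta,\gamma)\in\mathbb{K}^3$, the down-up algebra $A(\alpha,\beta,\gamma)$ is the quotient of $\mathbb{K}\langle d,u\rangle$ by the two-sided ideal generated by $d^2u-(\alpha dud+\beta ud^2+\gamma d)$ and $du^2-(\alpha udu+\beta u^2d+\gamma u)$. A one-dimensional $A(\alpha,0,\gamma)$-module is $\mathbb{K}$ with $d$ and $u$ acting by scalars $\delta,\mu$ satisfying $\delta((1-\alpha)\delta\mu-\gamma)=0=\mu((1-\alpha)\delta\mu-\gamma)$; such a pair defines both a left and a right module. The trivial module $\mathbb{K}$ is the one with $\delta=\mu=0$. *)

theory Defs
  imports Main
begin

datatype gen = Dg | Ug

text \<open>Elements of the free algebra K<d,u>: finitely supported functions from words to K.\<close>
type_synonym 'k fa = "gen list \<Rightarrow> 'k"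

definition fa_carrier :: "('k::field) fa set" where
  "fa_carrier = {f. finite {w. f w \<noteq> 0}}"

definition fa_mon :: "gen list \<Rightarrow> ('k::field) fa" where
  "fa_mon w = (\<lambda>v. if v = w then 1 else 0)"

definition fa_mult :: "('k::field) fa \<Rightarrow> 'k fa \<Rightarrow> 'k fa" where
  "fa_mult f g = (\<lambda>w. \<Sum>i\<le>length w. f (take i w) * g (drop i w))"

definition fa_lincomb :: "(nat \<Rightarrow> 'k::field) \<Rightarrow> (nat \<Rightarrow> 'k fa) \<Rightarrow> nat \<Rightarrow> 'k fa" where
  "fa_lincomb c v n = (\<lambda>w. \<Sum>i<n. c i * v i w)"

definition fa_span :: "('k::field) fa set \<Rightarrow> 'k fa set" where
  "fa_span S = {fa_lincomb c v n | c v n. \<forall>i<n. v i \<in> S}"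

definition du_rel1 :: "'k::field \<Rightarrow> 'k \<Rightarrow> 'k \<Rightarrow> 'k fa" where
  "du_rel1 \<alpha> \<beta> \<gamma> = (\<lambda>w. fa_mon [Dg,Dg,Ug] w - \<alpha> * fa_mon [Dg,Ug,Dg] w
      - \<beta> * fa_mon [Ug,Dg,Dg] w - \<gamma> * fa_mon [Dg] w)"

definition du_rel2 :: "'k::field \<Rightarrow> 'k \<Rightarrow> 'k \<Rightarrow> 'k fa" where
  "du_rel2 \<alpha> \<beta> \<gamma> = (\<lambda>w. fa_mon [Dg,Ug,Ug] w - \<alpha> * fa_mon [Ug,Dg,Ug] w
      - \<beta> * fa_mon [Ug,Ug,Dg] w - \<gamma> * fa_mon [Ug] w)"

definition du_ideal :: "'k::field \<Rightarrow> 'k \<Rightarrow> 'k \<Rightarrow> 'k fa set" where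
  "du_ideal \<alpha> \<beta> \<gamma> = fa_span {fa_mult (fa_mult (fa_mon a) r) (fa_mon b) | a b r.
      r \<in> {du_rel1 \<alpha> \<beta> \<gamma>, du_rel2 \<alpha> \<beta> \<gamma>}}"

text \<open>Action of a word on a one-dimensional module with d, u acting by delta, mu.\<close>
definition word_eval :: "'k::field \<Rightarrow> 'k \<Rightarrow> gen list \<Rightarrow> 'k" where
  "word_eval \<delta> \<mu> w = prod_list (map (\<lambda>x. case x of Dg \<Rightarrow> \<delta> | Ug \<Rightarrow> \<mu>) w)"

definition fa_eval :: "'k::field \<Rightarrow> 'k \<Rightarrow> 'k fa \<Rightarrow> 'k" where
  "fa_eval \<delta> \<mu> f = (\<Sum>w\<in>{w. f w \<noteq> 0}. f w * word_eval \<delta> \<mu> w)"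

text \<open>(delta, mu) defines a one-dimensional A(alpha,0,gamma)-module.\<close>
definition one_dim_module :: "'k::field \<Rightarrow> 'k \<Rightarrow> 'k \<Rightarrow> 'k \<Rightarrow> bool" where
  "one_dim_module \<alpha> \<gamma> \<delta> \<mu> \<longleftrightarrow>
     \<delta> * ((1 - \<alpha>) * \<delta> * \<mu> - \<gamma>) = 0 \<and> \<mu> * ((1 - \<alpha>) * \<delta> * \<mu> - \<gamma>) = 0"

text \<open>Bar complex T1 (x) A^{(x)n} (x) T2 computing Tor^A(T1,T2), lifted to the free algebra.
  Degree 1 chains are A = F/I; d1(a) = chi1(a) - chi2(a);
  d2(a (x) b) = chi1(a) b - ab + chi2(b) a.\<close>
definition tor1_cycles :: "'k::field \<Rightarrow> 'k \<Rightarrow> 'k \<Rightarrow> 'k \<Rightarrow> 'k fa set" where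
  "tor1_cycles \<delta>1 \<mu>1 \<delta>2 \<mu>2 = {f \<in> fa_carrier. fa_eval \<delta>1 \<mu>1 f = fa_eval \<delta>2 \<mu>2 f}"

definition bar_bd :: "'k::field \<Rightarrow> 'k \<Rightarrow> 'k \<Rightarrow> 'k \<Rightarrow> gen list \<Rightarrow> gen list \<Rightarrow> 'k fa" where
  "bar_bd \<delta>1 \<mu>1 \<delta>2 \<mu>2 a b = (\<lambda>w. word_eval \<delta>1 \<mu>1 a * fa_mon b w - fa_mon (a @ b) w
      + word_eval \<delta>2 \<mu>2 b * fa_mon a w)"

definition tor1_boundaries :: "'k::field \<Rightarrow> 'k \<Rightarrow> 'k \<Rightarrow> 'k \<Rightarrow> 'k \<Rightarrow> 'k \<Rightarrow> 'k \<Rightarrow> 'k fa set" where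
  "tor1_boundaries \<alpha> \<beta> \<gamma> \<delta>1 \<mu>1 \<delta>2 \<mu>2 =
     {(\<lambda>w. g w + h w) | g h. g \<in> fa_span {bar_bd \<delta>1 \<mu>1 \<delta>2 \<mu>2 a b | a b. True}
                          \<and> h \<in> du_ideal \<alpha> \<beta> \<gamma>}"

text \<open>Dimension of the quotient K/S (S a subspace of K): least number of vectors of K
  spanning K modulo S.\<close>
definition fa_codim :: "('k::field) fa set \<Rightarrow> 'k fa set \<Rightarrow> nat" where
  "fa_codim K S = (LEAST n. \<exists>v. (\<forall>i<n. v i \<in> K) \<and>
       K \<subseteq> {(\<lambda>w. s w + fa_lincomb c v n w) | s c. s \<in> S})"

text \<open>dim_K Tor_1^A(T1,T2) for A = A(alpha,0,gamma), T1 right module (delta1,mu1),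
  T2 left module (delta2,mu2).\<close>
definition tor1_dim :: "'k::field \<Rightarrow> 'k \<Rightarrow> 'k \<Rightarrow> 'k \<Rightarrow> 'k \<Rightarrow> 'k \<Rightarrow> nat" where
  "tor1_dim \<alpha> \<gamma> \<delta>1 \<mu>1 \<delta>2 \<mu>2 =
     fa_codim (tor1_cycles \<delta>1 \<mu>1 \<delta>2 \<mu>2) (tor1_boundaries \<alpha> 0 \<gamma> \<delta>1 \<mu>1 \<delta>2 \<mu>2)"

end

theory Submission
  imports Defs
begin

inductive_set spn :: "('k::field) fa set \<Rightarrow> 'k fa set" for X where
  spn_zero: "(\<lambda>w. 0) \<in> spn X"
| spn_step: "g \<in> spn X \<Longrightarrow> x \<in> X \<Longrightarrow> (\<lambda>w. g w + c * x w) \<in> spn X"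

lemma lincomb_Suc: "fa_lincomb c v (Suc n) = (\<lambda>w. fa_lincomb c v n w + c n * v n w)"
  by (simp add: fa_lincomb_def)

lemma fa_span_spn: "fa_span X = spn X"
proof
  show "fa_span X \<subseteq> spn X"
  proof
    fix f assume "f \<in> fa_span X"
    then obtain c v n where f: "f = fa_lincomb c v n" and v: "\<forall>i<n. v i \<in> X"
      unfolding fa_span_def by blast
    have "\<forall>i<n. v i \<in> X \<Longrightarrow> fa_lincomb c v n \<in> spn X" for n
    proof (induction n)
      case 0 then show ?case by (simp add: fa_lincomb_def spn_zero)
    next
      case (Suc n) then show ?case by (simp add: lincomb_Suc spn_step)
    qed
    with f v show "f \<in> spn X" by simp
  qed
next
  show "spn X \<subseteq> fa_span X"
  proof
    fix f assume "f \<in> spn X"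
    then show "f \<in> fa_span X"
    proof induction
      case spn_zero
      have "(\<lambda>w. 0) = fa_lincomb (\<lambda>_. 0) (\<lambda>_. \<lambda>_. 0) 0" by (simp add: fa_lincomb_def)
      then show ?case unfolding fa_span_def by blast
    next
      case (spn_step g x c)
      then obtain c0 v n where g: "g = fa_lincomb c0 v n" and v: "\<forall>i<n. v i \<in> X"
        unfolding fa_span_def by blast
      have "(\<lambda>w. g w + c * x w) = fa_lincomb (c0(n:=c)) (v(n:=x)) (Suc n)"
        unfolding g lincomb_Suc by (simp add: fa_lincomb_def)
      moreover have "\<forall>i<Suc n. (v(n:=x)) i \<in> X" using v spn_step by (simp add: less_Suc_eq)
      ultimately show ?case unfolding fa_span_def by blast
    qed
  qed
qed

lemma spn_add: assumes "g \<in> spn X" "h \<in> spn X" shows "(\<lambda>w. g w + h w) \<in> spn X"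
  using assms(2)
proof (induction h rule: spn.induct)
  case spn_zero then show ?case using assms(1) by simp
next
  case (spn_step h x c)
  have "(\<lambda>w. g w + (h w + c * x w)) = (\<lambda>w. (\<lambda>w. g w + h w) w + c * x w)" by (simp add: add.assoc)
  then show ?case using spn.spn_step[OF spn_step.IH spn_step.hyps(2)] by simp
qed

lemma spn_scale: "h \<in> spn X \<Longrightarrow> (\<lambda>w. a * h w) \<in> spn X"
proof (induction h rule: spn.induct)
  case spn_zero then show ?case by (simp add: spn.spn_zero)
next
  case (spn_step h x c)
  have "(\<lambda>w. a * (h w + c * x w)) = (\<lambda>w. (\<lambda>w. a * h w) w + (a*c) * x w)" by (simp add: algebra_simps)
  then show ?case using spn.spn_step[OF spn_step.IH spn_step.hyps(2), of "a*c"] by simp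
qed

lemma spn_gen: "x \<in> X \<Longrightarrow> x \<in> spn X"
  using spn_step[OF spn_zero, of x X 1] by simp

lemma spn_induct_lin:
  assumes "f \<in> spn X" "P (\<lambda>w. 0)" "\<And>g x c. P g \<Longrightarrow> x \<in> X \<Longrightarrow> g \<in> spn X \<Longrightarrow> P (\<lambda>w. g w + c * x w)"
  shows "P f"
  using assms(1) by induction (auto intro: assms(2,3))

definition lf :: "(gen list \<Rightarrow> 'k::field) \<Rightarrow> 'k fa \<Rightarrow> 'k" where
  "lf D f = (\<Sum>w\<in>{w. f w \<noteq> 0}. f w * D w)"

lemma fa_eval_lf: "fa_eval \<delta> \<mu> f = lf (word_eval \<delta> \<mu>) f"
  by (simp add: fa_eval_def lf_def)

lemma lf_superset:
  assumes "finite F" "{w. f w \<noteq> 0} \<subseteq> F"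
  shows "lf D f = (\<Sum>w\<in>F. f w * D w)"
  unfolding lf_def using assms by (intro sum.mono_neutral_left) auto

lemma fin_add: "f \<in> fa_carrier \<Longrightarrow> g \<in> fa_carrier \<Longrightarrow> (\<lambda>w. f w + c * g w) \<in> fa_carrier"
proof -
  assume a: "f \<in> fa_carrier" "g \<in> fa_carrier"
  have "{w. f w + c * g w \<noteq> 0} \<subseteq> {w. f w \<noteq> 0} \<union> {w. g w \<noteq> 0}" by auto
  then show ?thesis using a unfolding fa_carrier_def by (auto intro: finite_subset)
qed

lemma fin_zero: "(\<lambda>w. 0) \<in> fa_carrier" by (simp add: fa_carrier_def)

lemma fin_mon: "fa_mon a \<in> fa_carrier"
proof -
  have "{w. fa_mon a w \<noteq> (0::'a)} \<subseteq> {a}" by (auto simp: fa_mon_def)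
  then show ?thesis unfolding fa_carrier_def by (auto intro: finite_subset)
qed

lemma lf_add:
  assumes "f \<in> fa_carrier" "g \<in> fa_carrier"
  shows "lf D (\<lambda>w. f w + c * g w) = lf D f + c * lf D g"
proof -
  let ?F = "{w. f w \<noteq> 0} \<union> {w. g w \<noteq> 0}"
  have fin: "finite ?F" using assms by (simp add: fa_carrier_def)
  have "lf D (\<lambda>w. f w + c * g w) = (\<Sum>w\<in>?F. (f w + c * g w) * D w)"
    by (rule lf_superset[OF fin]) auto
  also have "\<dots> = (\<Sum>w\<in>?F. f w * D w) + c * (\<Sum>w\<in>?F. g w * D w)"
    by (simp add: algebra_simps sum.distrib sum_distrib_left)
  also have "(\<Sum>w\<in>?F. f w * D w) = lf D f" by (rule lf_superset[OF fin, symmetric]) auto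
  also have "(\<Sum>w\<in>?F. g w * D w) = lf D g" by (rule lf_superset[OF fin, symmetric]) auto
  finally show ?thesis .
qed

lemma lf_zero: "lf D (\<lambda>w. 0) = 0" by (simp add: lf_def)

lemma lf_mon: "lf D (fa_mon a) = D a"
proof -
  have "lf D (fa_mon a) = (\<Sum>w\<in>{a}. fa_mon a w * D w)"
    by (rule lf_superset) (auto simp: fa_mon_def)
  then show ?thesis by (simp add: fa_mon_def)
qed

lemma spn_fin: "X \<subseteq> fa_carrier \<Longrightarrow> f \<in> spn X \<Longrightarrow> f \<in> fa_carrier"
  by (erule spn_induct_lin) (auto intro: fin_zero fin_add)

lemma spn_lf_zero:
  assumes "X \<subseteq> fa_carrier" "\<And>x. x \<in> X \<Longrightarrow> lf D x = 0" "f \<in> spn X"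
  shows "lf D f = 0"
  using assms(3)
proof (induction rule: spn.induct)
  case spn_zero then show ?case by (simp add: lf_zero)
next
  case (spn_step g x c)
  have "g \<in> fa_carrier" using spn_fin[OF assms(1) spn_step(1)] .
  moreover have "x \<in> fa_carrier" using assms(1) spn_step(2) by auto
  ultimately show ?case using lf_add[of g x D c] spn_step.IH assms(2)[OF spn_step.hyps(2)] by simp
qed

lemma spn_lf_eq:
  assumes "X \<subseteq> fa_carrier" "\<And>x. x \<in> X \<Longrightarrow> lf D x = lf E x" "f \<in> spn X"
  shows "lf D f = lf E f"
  using assms(3)
proof (induction rule: spn.induct)
  case spn_zero then show ?case by (simp add: lf_zero)
next
  case (spn_step g x c)
  have "g \<in> fa_carrier" using spn_fin[OF assms(1) spn_step(1)] .
  moreover have "x \<in> fa_carrier" using assms(1) spn_step(2) by auto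
  ultimately show ?case using lf_add[of g x D c] lf_add[of g x E c] spn_step.IH assms(2)[OF spn_step.hyps(2)] by simp
qed

lemma mult_mon_left1: "fa_mult (fa_mon a) f (a @ v) = f v"
proof -
  have "fa_mult (fa_mon a) f (a @ v) = (\<Sum>i\<le>length (a@v). if i = length a then f v else 0)"
    unfolding fa_mult_def
  proof (rule sum.cong[OF refl])
    fix i assume i: "i \<in> {..length (a@v)}"
    show "fa_mon a (take i (a @ v)) * f (drop i (a @ v)) = (if i = length a then f v else 0)"
    proof (cases "take i (a@v) = a")
      case True
      then have "length (take i (a@v)) = length a" by simp
      then have "i = length a" using i by simp
      then show ?thesis by (simp add: fa_mon_def)
    next
      case False
      then have "i \<noteq> length a" by auto
      then show ?thesis using False by (simp add: fa_mon_def)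
    qed
  qed
  also have "\<dots> = f v" by simp
  finally show ?thesis .
qed

lemma mult_mon_left0: "\<not> (\<exists>v. w = a @ v) \<Longrightarrow> fa_mult (fa_mon a) f w = 0"
  unfolding fa_mult_def fa_mon_def
  by (rule sum.neutral) (metis append_take_drop_id mult_zero_left)

lemma mult_mon_right1: "fa_mult f (fa_mon b) (v @ b) = f v"
proof -
  have "fa_mult f (fa_mon b) (v @ b) = (\<Sum>i\<le>length (v@b). if i = length v then f v else 0)"
    unfolding fa_mult_def
  proof (rule sum.cong[OF refl])
    fix i assume i: "i \<in> {..length (v@b)}"
    show "f (take i (v @ b)) * fa_mon b (drop i (v @ b)) = (if i = length v then f v else 0)"
    proof (cases "drop i (v@b) = b")
      case True
      then have "length (drop i (v@b)) = length b" by simp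
      then have "i = length v" using i by simp
      then show ?thesis by (simp add: fa_mon_def)
    next
      case False
      then have "i \<noteq> length v" by auto
      then show ?thesis using False by (simp add: fa_mon_def)
    qed
  qed
  also have "\<dots> = f v" by simp
  finally show ?thesis .
qed

lemma mult_mon_right0: "\<not> (\<exists>v. w = v @ b) \<Longrightarrow> fa_mult f (fa_mon b) w = 0"
  unfolding fa_mult_def fa_mon_def
  by (rule sum.neutral) (metis append_take_drop_id mult_zero_right)

definition gmul :: "gen list \<Rightarrow> 'k::field fa \<Rightarrow> gen list \<Rightarrow> 'k fa" where
  "gmul a r b = fa_mult (fa_mult (fa_mon a) r) (fa_mon b)"

lemma gmul1: "gmul a r b (a @ v @ b) = r v"
  unfolding gmul_def using mult_mon_right1[of "fa_mult (fa_mon a) r" b "a@v"] mult_mon_left1[of a r v] by simp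

lemma gmul0: "\<not> (\<exists>v. w = a @ v @ b) \<Longrightarrow> gmul a r b w = 0"
  unfolding gmul_def
  by (metis append.assoc mult_mon_left0 mult_mon_right0 mult_mon_right1)

lemma gmul_nz: "gmul a r b w \<noteq> 0 \<Longrightarrow> \<exists>v. w = a @ v @ b \<and> r v \<noteq> 0"
  using gmul0 gmul1 by metis

lemma gmul_supp: "{w. gmul a r b w \<noteq> 0} = (\<lambda>v. a @ v @ b) ` {v. r v \<noteq> 0}"
proof (rule set_eqI, rule iffI)
  fix w assume "w \<in> {w. gmul a r b w \<noteq> 0}"
  then obtain v where "w = a @ v @ b" "r v \<noteq> 0" using gmul_nz by blast
  then show "w \<in> (\<lambda>v. a @ v @ b) ` {v. r v \<noteq> 0}" by blast
next
  fix w assume "w \<in> (\<lambda>v. a @ v @ b) ` {v. r v \<noteq> 0}"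
  then obtain v where "w = a @ v @ b" "r v \<noteq> 0" by blast
  then show "w \<in> {w. gmul a r b w \<noteq> 0}" by (simp add: gmul1)
qed

lemma gmul_fin: "r \<in> fa_carrier \<Longrightarrow> gmul a r b \<in> fa_carrier"
  by (simp add: fa_carrier_def gmul_supp)

lemma gmul_lf:
  assumes "\<And>v. D (a @ v @ b) = D a * D v * D b"
  shows "lf D (gmul a r b) = D a * lf D r * D b"
proof -
  have inj: "inj_on (\<lambda>v. a @ v @ b) {v. r v \<noteq> 0}" by (auto simp: inj_on_def)
  have "lf D (gmul a r b) = (\<Sum>v\<in>{v. r v \<noteq> 0}. gmul a r b (a@v@b) * D (a@v@b))"
    unfolding lf_def gmul_supp sum.reindex[OF inj] by simp
  also have "\<dots> = (\<Sum>v\<in>{v. r v \<noteq> 0}. D a * (r v * D v) * D b)"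
    by (simp add: gmul1 assms algebra_simps)
  also have "\<dots> = D a * lf D r * D b"
    by (simp add: lf_def sum_distrib_left sum_distrib_right)
  finally show ?thesis .
qed

lemma gmul_nil: "gmul [] r [] = r"
  using gmul1[of "[]" r "[]"] by auto

lemma word_eval_append: "word_eval \<delta> \<mu> (a @ b) = word_eval \<delta> \<mu> a * word_eval \<delta> \<mu> b"
  by (simp add: word_eval_def)


definition BDs :: "'k::field \<Rightarrow> 'k \<Rightarrow> 'k \<Rightarrow> 'k \<Rightarrow> 'k fa set" where
  "BDs d1 m1 d2 m2 = {bar_bd d1 m1 d2 m2 a b | a b. True}"

definition IGs :: "'k::field \<Rightarrow> 'k \<Rightarrow> 'k fa set" where
  "IGs \<alpha> \<gamma> = {gmul a r b | a b r. r \<in> {du_rel1 \<alpha> 0 \<gamma>, du_rel2 \<alpha> 0 \<gamma>}}"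

lemma bnd_eq: "tor1_boundaries \<alpha> 0 \<gamma> d1 m1 d2 m2 =
  {(\<lambda>w. g w + h w) | g h. g \<in> spn (BDs d1 m1 d2 m2) \<and> h \<in> spn (IGs \<alpha> \<gamma>)}"
  unfolding tor1_boundaries_def du_ideal_def fa_span_spn BDs_def IGs_def gmul_def by simp

lemma comb4: "(\<lambda>w. fa_mon p w - c1 * fa_mon q w - c2 * fa_mon r w - c3 * fa_mon t w) =
  (\<lambda>w. (\<lambda>w. (\<lambda>w. (\<lambda>w. (\<lambda>w. 0) w + 1 * fa_mon p w) w + (-c1) * fa_mon q w) w
        + (-c2) * fa_mon r w) w + (-c3) * fa_mon t w)"
  by (simp add: fun_eq_iff)

lemma fin4: "(\<lambda>w. fa_mon p w - c1 * fa_mon q w - c2 * fa_mon r w - c3 * fa_mon t w) \<in> fa_carrier"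
  unfolding comb4 by (intro fin_add fin_zero fin_mon)

lemma lf4: "lf D (\<lambda>w. fa_mon p w - c1 * fa_mon q w - c2 * fa_mon r w - c3 * fa_mon t w)
   = D p - c1 * D q - c2 * D r - c3 * D t"
  unfolding comb4
  apply (subst lf_add, (intro fin_add fin_zero fin_mon)+)+
  apply (simp only: lf_zero lf_mon)
  apply simp
  done

lemma bar_comb: "bar_bd d1 m1 d2 m2 a b =
  (\<lambda>w. (\<lambda>w. (\<lambda>w. (\<lambda>w. 0) w + word_eval d1 m1 a * fa_mon b w) w + (-1) * fa_mon (a@b) w) w
     + word_eval d2 m2 b * fa_mon a w)"
  by (simp add: fun_eq_iff bar_bd_def)

lemma bar_fin: "bar_bd d1 m1 d2 m2 a b \<in> fa_carrier"
  unfolding bar_comb by (intro fin_add fin_zero fin_mon)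

lemma lf_bar: "lf D (bar_bd d1 m1 d2 m2 a b) =
   word_eval d1 m1 a * D b - D (a@b) + word_eval d2 m2 b * D a"
  unfolding bar_comb
  apply (subst lf_add, (intro fin_add fin_zero fin_mon)+)+
  apply (simp only: lf_zero lf_mon)
  apply simp
  done

lemma rel_fin: "r \<in> {du_rel1 \<alpha> 0 \<gamma>, du_rel2 \<alpha> 0 \<gamma>} \<Longrightarrow> r \<in> fa_carrier"
proof -
  assume r: "r \<in> {du_rel1 \<alpha> 0 \<gamma>, du_rel2 \<alpha> 0 \<gamma>}"
  have "du_rel1 \<alpha> 0 \<gamma> \<in> fa_carrier" unfolding du_rel1_def by (rule fin4)
  moreover have "du_rel2 \<alpha> 0 \<gamma> \<in> fa_carrier" unfolding du_rel2_def by (rule fin4)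
  ultimately show ?thesis using r by auto
qed

lemma BDs_fin: "BDs d1 m1 d2 m2 \<subseteq> fa_carrier"
  unfolding BDs_def using bar_fin by blast

lemma IGs_fin: "IGs \<alpha> \<gamma> \<subseteq> fa_carrier"
  unfolding IGs_def using gmul_fin rel_fin by blast

lemma S_intro: "g \<in> spn (BDs d1 m1 d2 m2) \<Longrightarrow> h \<in> spn (IGs \<alpha> \<gamma>) \<Longrightarrow>
  (\<lambda>w. g w + h w) \<in> tor1_boundaries \<alpha> 0 \<gamma> d1 m1 d2 m2"
  unfolding bnd_eq by blast

lemma S_step:
  assumes "s \<in> tor1_boundaries \<alpha> 0 \<gamma> d1 m1 d2 m2" "x \<in> tor1_boundaries \<alpha> 0 \<gamma> d1 m1 d2 m2"
  shows "(\<lambda>w. s w + c * x w) \<in> tor1_boundaries \<alpha> 0 \<gamma> d1 m1 d2 m2"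
proof -
  obtain g1 h1 where 1: "s = (\<lambda>w. g1 w + h1 w)" "g1 \<in> spn (BDs d1 m1 d2 m2)" "h1 \<in> spn (IGs \<alpha> \<gamma>)"
    using assms(1) unfolding bnd_eq by blast
  obtain g2 h2 where 2: "x = (\<lambda>w. g2 w + h2 w)" "g2 \<in> spn (BDs d1 m1 d2 m2)" "h2 \<in> spn (IGs \<alpha> \<gamma>)"
    using assms(2) unfolding bnd_eq by blast
  have "(\<lambda>w. g1 w + (\<lambda>w. c * g2 w) w) \<in> spn (BDs d1 m1 d2 m2)" using 1 2 spn_add spn_scale by blast
  moreover have "(\<lambda>w. h1 w + (\<lambda>w. c * h2 w) w) \<in> spn (IGs \<alpha> \<gamma>)" using 1 2 spn_add spn_scale by blast
  moreover have "(\<lambda>w. s w + c * x w) = (\<lambda>w. (\<lambda>w. g1 w + (\<lambda>w. c * g2 w) w) w + (\<lambda>w. h1 w + (\<lambda>w. c * h2 w) w) w)"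
    using 1 2 by (simp add: fun_eq_iff algebra_simps)
  ultimately show ?thesis using S_intro[of "\<lambda>w. g1 w + c * g2 w" d1 m1 d2 m2 "\<lambda>w. h1 w + c * h2 w" \<alpha> \<gamma>] by simp
qed

lemma S_zero: "(\<lambda>w. 0) \<in> tor1_boundaries \<alpha> 0 \<gamma> d1 m1 d2 m2"
  using S_intro[OF spn_zero spn_zero] by simp

lemma S_scale: "s \<in> tor1_boundaries \<alpha> 0 \<gamma> d1 m1 d2 m2 \<Longrightarrow> (\<lambda>w. c * s w) \<in> tor1_boundaries \<alpha> 0 \<gamma> d1 m1 d2 m2"
  using S_step[OF S_zero, of s \<alpha> \<gamma> d1 m1 d2 m2 c] by simp

lemma S_bar: "bar_bd d1 m1 d2 m2 a b \<in> tor1_boundaries \<alpha> 0 \<gamma> d1 m1 d2 m2"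
proof -
  have "bar_bd d1 m1 d2 m2 a b \<in> spn (BDs d1 m1 d2 m2)" by (rule spn_gen) (auto simp: BDs_def)
  then show ?thesis using S_intro[OF _ spn_zero] by fastforce
qed

lemma S_ig: "r \<in> {du_rel1 \<alpha> 0 \<gamma>, du_rel2 \<alpha> 0 \<gamma>} \<Longrightarrow> gmul a r b \<in> tor1_boundaries \<alpha> 0 \<gamma> d1 m1 d2 m2"
proof -
  assume r: "r \<in> {du_rel1 \<alpha> 0 \<gamma>, du_rel2 \<alpha> 0 \<gamma>}"
  have "gmul a r b \<in> spn (IGs \<alpha> \<gamma>)" by (rule spn_gen) (use r in \<open>auto simp: IGs_def\<close>)
  then show ?thesis using S_intro[OF spn_zero] by fastforce
qed

lemma S_rel: "r \<in> {du_rel1 \<alpha> 0 \<gamma>, du_rel2 \<alpha> 0 \<gamma>} \<Longrightarrow> r \<in> tor1_boundaries \<alpha> 0 \<gamma> d1 m1 d2 m2"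
  using S_ig[of r \<alpha> \<gamma> "[]" "[]"] gmul_nil by metis

lemma S_fin: "s \<in> tor1_boundaries \<alpha> 0 \<gamma> d1 m1 d2 m2 \<Longrightarrow> s \<in> fa_carrier"
  unfolding bnd_eq
  using spn_fin[OF BDs_fin] spn_fin[OF IGs_fin] fin_add[of _ _ 1] by fastforce

lemma S_lf_zero:
  assumes "\<And>a b. lf D (bar_bd d1 m1 d2 m2 a b) = 0"
      and "\<And>a b r. r \<in> {du_rel1 \<alpha> 0 \<gamma>, du_rel2 \<alpha> 0 \<gamma>} \<Longrightarrow> lf D (gmul a r b) = 0"
      and "s \<in> tor1_boundaries \<alpha> 0 \<gamma> d1 m1 d2 m2"
  shows "lf D s = 0"
proof -
  obtain g h where 1: "s = (\<lambda>w. g w + h w)" "g \<in> spn (BDs d1 m1 d2 m2)" "h \<in> spn (IGs \<alpha> \<gamma>)"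
    using assms(3) unfolding bnd_eq by blast
  have g: "lf D g = 0" by (rule spn_lf_zero[OF BDs_fin _ 1(2)]) (use assms(1) in \<open>auto simp: BDs_def\<close>)
  have h: "lf D h = 0" by (rule spn_lf_zero[OF IGs_fin _ 1(3)]) (use assms(2) in \<open>auto simp: IGs_def\<close>)
  have "lf D s = lf D g + 1 * lf D h"
    unfolding 1(1) using lf_add[of g h D 1] spn_fin[OF BDs_fin 1(2)] spn_fin[OF IGs_fin 1(3)] by simp
  then show ?thesis using g h by simp
qed

lemma S_lf_eq:
  assumes "\<And>a b. lf D (bar_bd d1 m1 d2 m2 a b) = lf E (bar_bd d1 m1 d2 m2 a b)"
      and "\<And>a b r. r \<in> {du_rel1 \<alpha> 0 \<gamma>, du_rel2 \<alpha> 0 \<gamma>} \<Longrightarrow> lf D (gmul a r b) = 0"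
      and "\<And>a b r. r \<in> {du_rel1 \<alpha> 0 \<gamma>, du_rel2 \<alpha> 0 \<gamma>} \<Longrightarrow> lf E (gmul a r b) = 0"
      and "s \<in> tor1_boundaries \<alpha> 0 \<gamma> d1 m1 d2 m2"
  shows "lf D s = lf E s"
proof -
  obtain g h where 1: "s = (\<lambda>w. g w + h w)" "g \<in> spn (BDs d1 m1 d2 m2)" "h \<in> spn (IGs \<alpha> \<gamma>)"
    using assms(4) unfolding bnd_eq by blast
  have g: "lf D g = lf E g" by (rule spn_lf_eq[OF BDs_fin _ 1(2)]) (use assms(1) in \<open>auto simp: BDs_def\<close>)
  have hD: "lf D h = 0" by (rule spn_lf_zero[OF IGs_fin _ 1(3)]) (use assms(2) in \<open>auto simp: IGs_def\<close>)
  have hE: "lf E h = 0" by (rule spn_lf_zero[OF IGs_fin _ 1(3)]) (use assms(3) in \<open>auto simp: IGs_def\<close>)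
  have "lf D s = lf D g + 1 * lf D h" "lf E s = lf E g + 1 * lf E h"
    unfolding 1(1) using lf_add[of g h _ 1] spn_fin[OF BDs_fin 1(2)] spn_fin[OF IGs_fin 1(3)] by simp_all
  then show ?thesis using g hD hE by simp
qed

lemma rel_eval_zero:
  assumes "one_dim_module \<alpha> \<gamma> \<delta> \<mu>" "r \<in> {du_rel1 \<alpha> 0 \<gamma>, du_rel2 \<alpha> 0 \<gamma>}"
  shows "lf (word_eval \<delta> \<mu>) r = 0"
proof -
  have "lf (word_eval \<delta> \<mu>) (du_rel1 \<alpha> 0 \<gamma>) = \<delta> * ((1 - \<alpha>) * \<delta> * \<mu> - \<gamma>)"
    unfolding du_rel1_def lf4 by (simp add: word_eval_def algebra_simps)
  moreover have "lf (word_eval \<delta> \<mu>) (du_rel2 \<alpha> 0 \<gamma>) = \<mu> * ((1 - \<alpha>) * \<delta> * \<mu> - \<gamma>)"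
    unfolding du_rel2_def lf4 by (simp add: word_eval_def algebra_simps)
  ultimately show ?thesis using assms unfolding one_dim_module_def by auto
qed

lemma ig_eval_zero:
  assumes "one_dim_module \<alpha> \<gamma> \<delta> \<mu>" "r \<in> {du_rel1 \<alpha> 0 \<gamma>, du_rel2 \<alpha> 0 \<gamma>}"
  shows "lf (word_eval \<delta> \<mu>) (gmul a r b) = 0"
  using gmul_lf[of "word_eval \<delta> \<mu>" a b r] rel_eval_zero[OF assms] by (simp add: word_eval_append)

lemma S_chi:
  assumes "one_dim_module \<alpha> \<gamma> d1 m1" "one_dim_module \<alpha> \<gamma> d2 m2"
      and "s \<in> tor1_boundaries \<alpha> 0 \<gamma> d1 m1 d2 m2"
  shows "fa_eval d1 m1 s = fa_eval d2 m2 s"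
  unfolding fa_eval_lf
  by (rule S_lf_eq[OF _ ig_eval_zero[OF assms(1)] ig_eval_zero[OF assms(2)] assms(3)])
     (simp add: lf_bar word_eval_append)


lemma red_mon:
  "\<exists>s\<in>tor1_boundaries \<alpha> 0 \<gamma> d1 m1 d2 m2. \<exists>x y.
     fa_mon v = (\<lambda>w. s w + x * fa_mon [Dg] w + y * fa_mon [Ug] w)"
proof (induction v)
  case Nil
  have "bar_bd d1 m1 d2 m2 [] [] = fa_mon []" by (simp add: bar_bd_def fun_eq_iff word_eval_def)
  then have "fa_mon [] \<in> tor1_boundaries \<alpha> 0 \<gamma> d1 m1 d2 m2" using S_bar by metis
  then show ?case by (intro bexI[of _ "fa_mon []"] exI[of _ 0]) auto
next
  case (Cons g t)
  then obtain s x y where s: "s \<in> tor1_boundaries \<alpha> 0 \<gamma> d1 m1 d2 m2"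
    and ht0: "fa_mon t = (\<lambda>w. s w + x * fa_mon [Dg] w + y * fa_mon [Ug] w)" by blast
  have ht: "fa_mon t w = s w + x * fa_mon [Dg] w + y * fa_mon [Ug] w" for w using ht0 by metis
  define c where "c = word_eval d1 m1 [g]"
  define e where "e = word_eval d2 m2 t"
  define s' where "s' = (\<lambda>w. (\<lambda>w. (\<lambda>w. 0) w + c * s w) w + (-1) * bar_bd d1 m1 d2 m2 [g] t w)"
  have s': "s' \<in> tor1_boundaries \<alpha> 0 \<gamma> d1 m1 d2 m2"
    unfolding s'_def by (intro S_step S_zero S_bar s)
  show ?case
  proof (cases g)
    case Dg
    have "fa_mon (g # t) = (\<lambda>w. s' w + (c*x + e) * fa_mon [Dg] w + (c*y) * fa_mon [Ug] w)"
      unfolding s'_def bar_bd_def c_def[symmetric] e_def[symmetric]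
      by (simp add: fun_eq_iff ht Dg algebra_simps)
    then show ?thesis using s' by blast
  next
    case Ug
    have "fa_mon (g # t) = (\<lambda>w. s' w + (c*x) * fa_mon [Dg] w + (c*y + e) * fa_mon [Ug] w)"
      unfolding s'_def bar_bd_def c_def[symmetric] e_def[symmetric]
      by (simp add: fun_eq_iff ht Ug algebra_simps)
    then show ?thesis using s' by blast
  qed
qed

lemma red_sum:
  assumes "finite F"
  shows "\<exists>s\<in>tor1_boundaries \<alpha> 0 \<gamma> d1 m1 d2 m2. \<exists>x y.
     (\<lambda>w'. \<Sum>w\<in>F. f w * fa_mon w w') = (\<lambda>w. s w + x * fa_mon [Dg] w + y * fa_mon [Ug] w)"
  using assms
proof (induction F rule: finite_induct)
  case empty
  show ?case by (intro bexI[OF _ S_zero] exI[of _ 0]) simp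
next
  case (insert a F)
  then obtain s2 x2 y2 where s2: "s2 \<in> tor1_boundaries \<alpha> 0 \<gamma> d1 m1 d2 m2"
    and e2: "(\<lambda>w'. \<Sum>w\<in>F. f w * fa_mon w w') = (\<lambda>w. s2 w + x2 * fa_mon [Dg] w + y2 * fa_mon [Ug] w)"
    by blast
  obtain s1 x1 y1 where s1: "s1 \<in> tor1_boundaries \<alpha> 0 \<gamma> d1 m1 d2 m2"
    and e1: "fa_mon a = (\<lambda>w. s1 w + x1 * fa_mon [Dg] w + y1 * fa_mon [Ug] w)"
    using red_mon by blast
  have e2': "(\<Sum>w\<in>F. f w * fa_mon w w') = s2 w' + x2 * fa_mon [Dg] w' + y2 * fa_mon [Ug] w'" for w'
    using e2 by metis
  have e1': "fa_mon a w' = s1 w' + x1 * fa_mon [Dg] w' + y1 * fa_mon [Ug] w'" for w'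
    using e1 by metis
  have eq: "(\<lambda>w'. \<Sum>w\<in>insert a F. f w * fa_mon w w') =
     (\<lambda>w. (\<lambda>w. s2 w + f a * s1 w) w + (x2 + f a * x1) * fa_mon [Dg] w + (y2 + f a * y1) * fa_mon [Ug] w)"
    using insert by (simp add: fun_eq_iff e2' e1' algebra_simps)
  have mem: "(\<lambda>w. s2 w + f a * s1 w) \<in> tor1_boundaries \<alpha> 0 \<gamma> d1 m1 d2 m2"
    by (rule S_step[OF s2 s1])
  show ?case
    apply (rule bexI[OF _ mem])
    apply (rule exI, rule exI, rule eq)
    done
qed

lemma sum_mon: "finite F \<Longrightarrow> {w. f w \<noteq> 0} \<subseteq> F \<Longrightarrow> (\<lambda>w'. \<Sum>w\<in>F. f w * fa_mon w w') = f"
proof (rule ext)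
  fix w' assume F: "finite F" "{w. f w \<noteq> 0} \<subseteq> F"
  have "(\<Sum>w\<in>F. f w * fa_mon w w') = (\<Sum>w\<in>F. if w' = w then f w else 0)"
    by (rule sum.cong) (auto simp: fa_mon_def)
  also have "\<dots> = (if w' \<in> F then f w' else 0)" using F by (simp add: sum.delta)
  also have "\<dots> = f w'" using F by auto
  finally show "(\<Sum>w\<in>F. f w * fa_mon w w') = f w'" .
qed

lemma red:
  assumes "f \<in> fa_carrier"
  shows "\<exists>s\<in>tor1_boundaries \<alpha> 0 \<gamma> d1 m1 d2 m2. \<exists>x y.
     f = (\<lambda>w. s w + x * fa_mon [Dg] w + y * fa_mon [Ug] w)"
proof -
  have fin: "finite {w. f w \<noteq> 0}" using assms by (simp add: fa_carrier_def)
  show ?thesis using red_sum[OF fin, of \<alpha> \<gamma> d1 m1 d2 m2 f] sum_mon[OF fin, of f] by simp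
qed

definition Pc :: "'k::field fa set \<Rightarrow> 'k fa set \<Rightarrow> nat \<Rightarrow> bool" where
  "Pc K S n \<longleftrightarrow> (\<exists>v. (\<forall>i<n. v i \<in> K) \<and>
       K \<subseteq> {(\<lambda>w. s w + fa_lincomb c v n w) | s c. s \<in> S})"

lemma Pc_intro:
  assumes "\<forall>i<n. v i \<in> K" "\<And>f. f \<in> K \<Longrightarrow> \<exists>s c. s \<in> S \<and> f = (\<lambda>w. s w + fa_lincomb c v n w)"
  shows "Pc K S n"
  unfolding Pc_def using assms by blast

lemma codim_le: "Pc K S n \<Longrightarrow> fa_codim K S \<le> n"
  unfolding fa_codim_def Pc_def[symmetric] by (rule Least_le)

lemma codim_eq: "Pc K S m \<Longrightarrow> (\<And>n. n < m \<Longrightarrow> \<not> Pc K S n) \<Longrightarrow> fa_codim K S = m"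
  unfolding fa_codim_def Pc_def[symmetric] by (rule Least_equality) (auto simp: not_less[symmetric])

lemma lincomb0: "fa_lincomb c v 0 = (\<lambda>w. 0)" by (simp add: fa_lincomb_def)
lemma lincomb1: "fa_lincomb c v 1 = (\<lambda>w. c 0 * v 0 w)" by (simp add: fa_lincomb_def)
lemma lincomb2: "fa_lincomb c v 2 = (\<lambda>w. c 0 * v 0 w + c 1 * v 1 w)"
  by (simp add: fa_lincomb_def numeral_2_eq_2)

lemma mon_cycle: "fa_mon a \<in> tor1_cycles \<delta> \<mu> \<delta> \<mu>"
  by (simp add: tor1_cycles_def fin_mon)

lemma up_eq2: "Pc (tor1_cycles \<delta> \<mu> \<delta> \<mu>) (tor1_boundaries \<alpha> 0 \<gamma> \<delta> \<mu> \<delta> \<mu>) 2"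
proof (rule Pc_intro[of _ "\<lambda>i. if i = 0 then fa_mon [Dg] else fa_mon [Ug]"])
  show "\<forall>i<2. (if i = 0 then fa_mon [Dg] else fa_mon [Ug]) \<in> tor1_cycles \<delta> \<mu> \<delta> \<mu>"
    by (simp add: mon_cycle)
  fix f assume "f \<in> tor1_cycles \<delta> \<mu> \<delta> \<mu>"
  then have "f \<in> fa_carrier" by (simp add: tor1_cycles_def)
  then obtain s x y where "s \<in> tor1_boundaries \<alpha> 0 \<gamma> \<delta> \<mu> \<delta> \<mu>"
    "f = (\<lambda>w. s w + x * fa_mon [Dg] w + y * fa_mon [Ug] w)" using red by blast
  then show "\<exists>s c. s \<in> tor1_boundaries \<alpha> 0 \<gamma> \<delta> \<mu> \<delta> \<mu> \<and>
     f = (\<lambda>w. s w + fa_lincomb c (\<lambda>i. if i = 0 then fa_mon [Dg] else fa_mon [Ug]) 2 w)"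
    by (intro exI[of _ s] exI[of _ "\<lambda>i. if i = 0 then x else y"]) (simp add: lincomb2 add.assoc)
qed

lemma comb2: "(\<lambda>w. a * fa_mon p w + b * fa_mon q w) =
   (\<lambda>w. (\<lambda>w. (\<lambda>w. 0) w + a * fa_mon p w) w + b * fa_mon q w)"
  by simp

lemma fin2: "(\<lambda>w. a * fa_mon p w + b * fa_mon q w) \<in> fa_carrier"
  unfolding comb2 by (intro fin_add fin_zero fin_mon)

lemma lf2: "lf D (\<lambda>w. a * fa_mon p w + b * fa_mon q w) = a * D p + b * D q"
  unfolding comb2
  apply (subst lf_add, (intro fin_add fin_zero fin_mon)+)+
  apply (simp only: lf_zero lf_mon)
  apply simp
  done

lemma lf_red:
  assumes "s \<in> fa_carrier"
  shows "lf D (\<lambda>w. s w + x * fa_mon [Dg] w + y * fa_mon [Ug] w) = lf D s + x * D [Dg] + y * D [Ug]"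
proof -
  have "lf D (\<lambda>w. s w + 1 * (\<lambda>w. x * fa_mon [Dg] w + y * fa_mon [Ug] w) w) = lf D s + 1 * (x * D [Dg] + y * D [Ug])"
    using lf_add[OF assms fin2, of D 1 x "[Dg]" y "[Ug]"] lf2 by simp
  then show ?thesis by (simp add: add.assoc)
qed

lemma up_ker:
  assumes m1: "one_dim_module \<alpha> \<gamma> d1 m1" and m2: "one_dim_module \<alpha> \<gamma> d2 m2"
      and ne: "\<not> (d1 = d2 \<and> m1 = m2)"
  shows "Pc (tor1_cycles d1 m1 d2 m2) (tor1_boundaries \<alpha> 0 \<gamma> d1 m1 d2 m2) 1"
proof -
  define p where "p = d1 - d2"
  define q where "q = m1 - m2"
  have pq: "p \<noteq> 0 \<or> q \<noteq> 0" using ne by (auto simp: p_def q_def)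
  define v0 where "v0 = (\<lambda>w. q * fa_mon [Dg] w + (-p) * fa_mon [Ug] w)"
  have v0f: "v0 \<in> fa_carrier" unfolding v0_def by (rule fin2)
  have "fa_eval d1 m1 v0 = fa_eval d2 m2 v0"
    unfolding v0_def fa_eval_lf lf2 by (simp add: word_eval_def p_def q_def algebra_simps)
  then have v0: "v0 \<in> tor1_cycles d1 m1 d2 m2"
    unfolding tor1_cycles_def using v0f by simp
  show ?thesis
  proof (rule Pc_intro[of _ "\<lambda>_. v0"])
    show "\<forall>i<1. v0 \<in> tor1_cycles d1 m1 d2 m2" using v0 by simp
    fix f assume f: "f \<in> tor1_cycles d1 m1 d2 m2"
    then have "f \<in> fa_carrier" by (simp add: tor1_cycles_def)
    then obtain s x y where s: "s \<in> tor1_boundaries \<alpha> 0 \<gamma> d1 m1 d2 m2"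
      and fe: "f = (\<lambda>w. s w + x * fa_mon [Dg] w + y * fa_mon [Ug] w)" using red by blast
    have sf: "s \<in> fa_carrier" using S_fin[OF s] .
    have "fa_eval d1 m1 f = fa_eval d2 m2 f" using f by (simp add: tor1_cycles_def)
    then have "lf (word_eval d1 m1) s + x * d1 + y * m1 = lf (word_eval d2 m2) s + x * d2 + y * m2"
      unfolding fe fa_eval_lf lf_red[OF sf] by (simp add: word_eval_def)
    moreover have "lf (word_eval d1 m1) s = lf (word_eval d2 m2) s"
      using S_chi[OF m1 m2 s] by (simp add: fa_eval_lf)
    ultimately have key: "x * p + y * q = 0" by (simp add: p_def q_def algebra_simps)
    define c0 where "c0 = (if p \<noteq> 0 then - y / p else x / q)"
    have "x = c0 * q \<and> y = - c0 * p"
    proof (cases "p = 0")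
      case True
      then have "q \<noteq> 0" using pq by simp
      then show ?thesis using True key by (simp add: c0_def)
    next
      case False
      then show ?thesis using key by (simp add: c0_def field_simps) (simp add: algebra_simps add_eq_0_iff)
    qed
    then have "f = (\<lambda>w. s w + fa_lincomb (\<lambda>_. c0) (\<lambda>_. v0) 1 w)"
      unfolding fe lincomb1 v0_def by (simp add: fun_eq_iff algebra_simps)
    then show "\<exists>s c. s \<in> tor1_boundaries \<alpha> 0 \<gamma> d1 m1 d2 m2 \<and> f = (\<lambda>w. s w + fa_lincomb c (\<lambda>_. v0) 1 w)"
      using s by blast
  qed
qed


lemma E1_in:
  "(\<lambda>w. ((1-\<alpha>)*(2*\<delta>*\<mu>) - \<gamma>) * fa_mon [Dg] w + ((1-\<alpha>)*\<delta>^2) * fa_mon [Ug] w)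
     \<in> tor1_boundaries \<alpha> 0 \<gamma> \<delta> \<mu> \<delta> \<mu>"
proof -
  let ?S = "tor1_boundaries \<alpha> 0 \<gamma> \<delta> \<mu> \<delta> \<mu>"
  let ?B = "bar_bd \<delta> \<mu> \<delta> \<mu>"
  have r1: "du_rel1 \<alpha> 0 \<gamma> \<in> ?S" by (rule S_rel) simp
  have "(\<lambda>w. (\<lambda>w. (\<lambda>w. du_rel1 \<alpha> 0 \<gamma> w + ((1-\<alpha>)*\<delta>) * ?B [Dg] [Ug] w) w + 1 * ?B [Dg] [Dg,Ug] w) w
            + (-\<alpha>) * ?B [Dg,Ug] [Dg] w) \<in> ?S"
    by (intro S_step r1 S_bar)
  moreover have "(\<lambda>w. (\<lambda>w. (\<lambda>w. du_rel1 \<alpha> 0 \<gamma> w + ((1-\<alpha>)*\<delta>) * ?B [Dg] [Ug] w) w + 1 * ?B [Dg] [Dg,Ug] w) w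
            + (-\<alpha>) * ?B [Dg,Ug] [Dg] w) =
     (\<lambda>w. ((1-\<alpha>)*(2*\<delta>*\<mu>) - \<gamma>) * fa_mon [Dg] w + ((1-\<alpha>)*\<delta>^2) * fa_mon [Ug] w)"
    by (simp add: fun_eq_iff du_rel1_def bar_bd_def word_eval_def algebra_simps power2_eq_square)
  ultimately show ?thesis by simp
qed

lemma E2_in:
  "(\<lambda>w. ((1-\<alpha>)*\<mu>^2) * fa_mon [Dg] w + ((1-\<alpha>)*(2*\<delta>*\<mu>) - \<gamma>) * fa_mon [Ug] w)
     \<in> tor1_boundaries \<alpha> 0 \<gamma> \<delta> \<mu> \<delta> \<mu>"
proof -
  let ?S = "tor1_boundaries \<alpha> 0 \<gamma> \<delta> \<mu> \<delta> \<mu>"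
  let ?B = "bar_bd \<delta> \<mu> \<delta> \<mu>"
  have r2: "du_rel2 \<alpha> 0 \<gamma> \<in> ?S" by (rule S_rel) simp
  have "(\<lambda>w. (\<lambda>w. (\<lambda>w. du_rel2 \<alpha> 0 \<gamma> w + ((1-\<alpha>)*\<mu>) * ?B [Dg] [Ug] w) w + 1 * ?B [Dg,Ug] [Ug] w) w
            + (-\<alpha>) * ?B [Ug] [Dg,Ug] w) \<in> ?S"
    by (intro S_step r2 S_bar)
  moreover have "(\<lambda>w. (\<lambda>w. (\<lambda>w. du_rel2 \<alpha> 0 \<gamma> w + ((1-\<alpha>)*\<mu>) * ?B [Dg] [Ug] w) w + 1 * ?B [Dg,Ug] [Ug] w) w
            + (-\<alpha>) * ?B [Ug] [Dg,Ug] w) =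
     (\<lambda>w. ((1-\<alpha>)*\<mu>^2) * fa_mon [Dg] w + ((1-\<alpha>)*(2*\<delta>*\<mu>) - \<gamma>) * fa_mon [Ug] w)"
    by (simp add: fun_eq_iff du_rel2_def bar_bd_def word_eval_def algebra_simps power2_eq_square)
  ultimately show ?thesis by simp
qed

lemma up_E:
  fixes ca cb :: "'k::field"
  assumes E: "(\<lambda>w. ca * fa_mon [Dg] w + cb * fa_mon [Ug] w) \<in> tor1_boundaries \<alpha> 0 \<gamma> \<delta> \<mu> \<delta> \<mu>"
      and nz: "ca \<noteq> 0 \<or> cb \<noteq> 0"
  shows "Pc (tor1_cycles \<delta> \<mu> \<delta> \<mu>) (tor1_boundaries \<alpha> 0 \<gamma> \<delta> \<mu> \<delta> \<mu>) 1"
proof -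
  let ?E = "\<lambda>w. ca * fa_mon [Dg] w + cb * fa_mon [Ug] w"
  define v0 :: "'k fa" where "v0 = (if ca \<noteq> 0 then fa_mon [Ug] else fa_mon [Dg])"
  show ?thesis
  proof (rule Pc_intro[where v="\<lambda>_. v0" and n=1])
    show "\<forall>i::nat<1. v0 \<in> tor1_cycles \<delta> \<mu> \<delta> \<mu>" by (simp add: v0_def mon_cycle)
    fix f assume "f \<in> tor1_cycles \<delta> \<mu> \<delta> \<mu>"
    then have "f \<in> fa_carrier" by (simp add: tor1_cycles_def)
    then obtain s x y where s: "s \<in> tor1_boundaries \<alpha> 0 \<gamma> \<delta> \<mu> \<delta> \<mu>"
      and fe: "f = (\<lambda>w. s w + x * fa_mon [Dg] w + y * fa_mon [Ug] w)" using red by blast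
    show "\<exists>s c. s \<in> tor1_boundaries \<alpha> 0 \<gamma> \<delta> \<mu> \<delta> \<mu> \<and> f = (\<lambda>w. s w + fa_lincomb c (\<lambda>_. v0) 1 w)"
    proof (cases "ca \<noteq> 0")
      case True
      have m: "(\<lambda>w. s w + (x/ca) * ?E w) \<in> tor1_boundaries \<alpha> 0 \<gamma> \<delta> \<mu> \<delta> \<mu>" by (rule S_step[OF s E])
      have "f = (\<lambda>w. (\<lambda>w. s w + (x/ca) * ?E w) w + fa_lincomb (\<lambda>_. y - x * cb / ca) (\<lambda>_. v0) 1 w)"
        unfolding fe lincomb1 v0_def using True by (simp add: fun_eq_iff field_simps)
      then show ?thesis using m by blast
    next
      case False
      then have cb: "cb \<noteq> 0" using nz by simp
      have m: "(\<lambda>w. s w + (y/cb) * ?E w) \<in> tor1_boundaries \<alpha> 0 \<gamma> \<delta> \<mu> \<delta> \<mu>" by (rule S_step[OF s E])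
      have "f = (\<lambda>w. (\<lambda>w. s w + (y/cb) * ?E w) w + fa_lincomb (\<lambda>_. x) (\<lambda>_. v0) 1 w)"
        unfolding fe lincomb1 v0_def using False cb by (simp add: fun_eq_iff field_simps)
      then show ?thesis using m by blast
    qed
  qed
qed

lemma up_zero:
  assumes E1: "(\<lambda>w. c1 * fa_mon [Dg] w) \<in> tor1_boundaries \<alpha> 0 \<gamma> \<delta> \<mu> \<delta> \<mu>"
      and E2: "(\<lambda>w. c2 * fa_mon [Ug] w) \<in> tor1_boundaries \<alpha> 0 \<gamma> \<delta> \<mu> \<delta> \<mu>"
      and nz: "c1 \<noteq> 0" "c2 \<noteq> 0"
  shows "Pc (tor1_cycles \<delta> \<mu> \<delta> \<mu>) (tor1_boundaries \<alpha> 0 \<gamma> \<delta> \<mu> \<delta> \<mu>) 0"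
proof (rule Pc_intro[of _ "\<lambda>_. fa_mon []"])
  show "\<forall>i::nat<0. fa_mon [] \<in> tor1_cycles \<delta> \<mu> \<delta> \<mu>" by auto
  fix f assume "f \<in> tor1_cycles \<delta> \<mu> \<delta> \<mu>"
  then have "f \<in> fa_carrier" by (simp add: tor1_cycles_def)
  then obtain s x y where s: "s \<in> tor1_boundaries \<alpha> 0 \<gamma> \<delta> \<mu> \<delta> \<mu>"
    and fe: "f = (\<lambda>w. s w + x * fa_mon [Dg] w + y * fa_mon [Ug] w)" using red by blast
  have m: "(\<lambda>w. (\<lambda>w. s w + (x/c1) * (c1 * fa_mon [Dg] w)) w + (y/c2) * (c2 * fa_mon [Ug] w))
      \<in> tor1_boundaries \<alpha> 0 \<gamma> \<delta> \<mu> \<delta> \<mu>" by (intro S_step s E1 E2)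
  have "f = (\<lambda>w. (\<lambda>w. (\<lambda>w. s w + (x/c1) * (c1 * fa_mon [Dg] w)) w + (y/c2) * (c2 * fa_mon [Ug] w)) w
      + fa_lincomb (\<lambda>_. 0) (\<lambda>_. fa_mon []) 0 w)"
    unfolding fe lincomb0 using nz by (simp add: fun_eq_iff)
  then show "\<exists>s c. s \<in> tor1_boundaries \<alpha> 0 \<gamma> \<delta> \<mu> \<delta> \<mu> \<and> f = (\<lambda>w. s w + fa_lincomb c (\<lambda>_. fa_mon []) 0 w)"
    using m by blast
qed


lemma lf_point: "f \<in> fa_carrier \<Longrightarrow> lf (\<lambda>v. if v = w then 1 else 0) f = f w"
proof -
  assume f: "f \<in> fa_carrier"
  have "lf (\<lambda>v. if v = w then 1 else 0) f = (\<Sum>v\<in>{v. f v \<noteq> 0}. if v = w then f v else 0)"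
    unfolding lf_def by (rule sum.cong) auto
  also have "\<dots> = f w" using f by (simp add: fa_carrier_def sum.delta')
  finally show ?thesis .
qed

lemma S_point_zero:
  assumes "\<And>a b. bar_bd d1 m1 d2 m2 a b w = 0"
      and "\<And>a b r. r \<in> {du_rel1 \<alpha> 0 \<gamma>, du_rel2 \<alpha> 0 \<gamma>} \<Longrightarrow> gmul a r b w = 0"
      and s: "s \<in> tor1_boundaries \<alpha> 0 \<gamma> d1 m1 d2 m2"
  shows "s w = 0"
proof -
  have "lf (\<lambda>v. if v = w then 1 else 0) s = 0"
  proof (rule S_lf_zero[OF _ _ s])
    show "lf (\<lambda>v. if v = w then 1 else 0) (bar_bd d1 m1 d2 m2 a b) = 0" for a b
      using lf_point[OF bar_fin[of d1 m1 d2 m2 a b], of w] assms(1)[of a b] by simp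
    show "lf (\<lambda>v. if v = w then 1 else 0) (gmul a r b) = 0" if "r \<in> {du_rel1 \<alpha> 0 \<gamma>, du_rel2 \<alpha> 0 \<gamma>}" for a b r
      using lf_point[OF gmul_fin[OF rel_fin[OF that]], of w] assms(2)[OF that] by simp
  qed
  then show ?thesis using lf_point[OF S_fin[OF s]] by simp
qed

lemma we00: "word_eval 0 0 x = (if x = [] then 1 else 0)"
  by (cases x) (auto simp: word_eval_def split: gen.splits)

lemma triv_S_zero:
  assumes s: "s \<in> tor1_boundaries \<alpha> 0 0 0 0 0 0" and w: "length w = 1"
  shows "s w = 0"
proof (rule S_point_zero[OF _ _ s])
  fix a b
  show "bar_bd 0 0 0 0 a b w = 0"
  proof (cases "a = []")
    case True then show ?thesis using w by (auto simp: bar_bd_def we00 fa_mon_def)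
  next
    case False
    show ?thesis
    proof (cases "b = []")
      case True then show ?thesis using w by (auto simp: bar_bd_def we00 fa_mon_def)
    next
      case False
      then have "length (a @ b) \<noteq> 1" using \<open>a \<noteq> []\<close> by (cases a; cases b) auto
      then have "a @ b \<noteq> w" using w by auto
      then show ?thesis using False \<open>a \<noteq> []\<close> by (simp add: bar_bd_def we00 fa_mon_def)
    qed
  qed
next
  fix a b r assume r: "r \<in> {du_rel1 \<alpha> 0 (0::'a), du_rel2 \<alpha> 0 0}"
  show "gmul a r b w = 0"
  proof (rule ccontr)
    assume "gmul a r b w \<noteq> 0"
    then obtain v where v: "w = a @ v @ b" "r v \<noteq> 0" using gmul_nz by blast
    then have "length v \<le> 1" using w by simp
    then have "r v = 0" using r by (auto simp: du_rel1_def du_rel2_def fa_mon_def)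
    then show False using v by simp
  qed
qed

lemma lincomb1_at: "f = (\<lambda>w. s w + fa_lincomb c v 1 w) \<Longrightarrow> f x = s x + c 0 * v 0 x"
  unfolding lincomb1 by simp

lemma lower2:
  fixes \<alpha> :: "'k::field"
  shows "fa_codim (tor1_cycles 0 0 0 0) (tor1_boundaries \<alpha> 0 (0::'k) 0 0 0 0) = 2"
proof (rule codim_eq[OF up_eq2])
  let ?K = "tor1_cycles (0::'k) 0 0 0" and ?S = "tor1_boundaries \<alpha> 0 (0::'k) 0 0 0 0"
  fix n :: nat assume n: "n < 2"
  show "\<not> Pc ?K ?S n"
  proof
    assume "Pc ?K ?S n"
    then obtain v where v: "\<forall>i<n. v i \<in> ?K" and sub: "?K \<subseteq> {(\<lambda>w. s w + fa_lincomb c v n w) | s c. s \<in> ?S}"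
      unfolding Pc_def by blast
    obtain s1 c1 where s1: "s1 \<in> ?S" and e1: "fa_mon [Dg] = (\<lambda>w. s1 w + fa_lincomb c1 v n w)"
      using sub mon_cycle by blast
    obtain s2 c2 where s2: "s2 \<in> ?S" and e2: "fa_mon [Ug] = (\<lambda>w. s2 w + fa_lincomb c2 v n w)"
      using sub mon_cycle by blast
    have z: "s1 [Dg] = 0" "s1 [Ug] = 0" "s2 [Dg] = 0" "s2 [Ug] = 0"
      using triv_S_zero[OF s1] triv_S_zero[OF s2] by auto
    show False
    proof (cases n)
      case 0
      have "fa_mon [Dg] [Dg] = s1 [Dg] + fa_lincomb c1 v n [Dg]" using e1 by metis
      then show False using z 0 by (simp add: fa_mon_def lincomb0)
    next
      case (Suc m)
      then have n1: "n = 1" using n by simp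
      have a: "fa_mon [Dg] [Dg] = s1 [Dg] + c1 0 * v 0 [Dg]" using lincomb1_at[OF e1[unfolded n1]] .
      have b: "fa_mon [Dg] [Ug] = s1 [Ug] + c1 0 * v 0 [Ug]" using lincomb1_at[OF e1[unfolded n1]] .
      have c: "fa_mon [Ug] [Ug] = s2 [Ug] + c2 0 * v 0 [Ug]" using lincomb1_at[OF e2[unfolded n1]] .
      from a z have "c1 0 * v 0 [Dg] = 1" by (simp add: fa_mon_def)
      then have "c1 0 \<noteq> 0" by auto
      with b z have "v 0 [Ug] = 0" by (simp add: fa_mon_def)
      with c z show False by (simp add: fa_mon_def)
    qed
  qed
qed

lemma we_mu0: "word_eval \<delta> 0 w = (if Ug \<in> set w then 0 else \<delta> ^ length w)"
  by (induction w) (auto simp: word_eval_def split: gen.splits)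

lemma we_delta0: "word_eval 0 \<mu> w = (if Dg \<in> set w then 0 else \<mu> ^ length w)"
  by (induction w) (auto simp: word_eval_def split: gen.splits)

lemma pow_id:
  fixes e :: "'k::field"
  shows "e ^ A * (of_nat B * e ^ (B - 1)) + e ^ B * (of_nat A * e ^ (A - 1)) = of_nat (A + B) * e ^ (A + B - 1)"
proof (cases A)
  case 0 then show ?thesis by simp
next
  case (Suc A')
  show ?thesis
  proof (cases B)
    case 0 then show ?thesis by simp
  next
    case (Suc B')
    have i1: "A + B - 1 = A + (B - 1)" "A + B - 1 = B + (A - 1)" using \<open>A = Suc A'\<close> Suc by simp_all
    have p1: "e ^ (A + B - 1) = e ^ A * e ^ (B - 1)" unfolding i1(1) power_add ..
    have p2: "e ^ (A + B - 1) = e ^ B * e ^ (A - 1)" unfolding i1(2) power_add ..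
    have "of_nat (A + B) * e ^ (A + B - 1) = of_nat B * e ^ (A + B - 1) + of_nat A * e ^ (A + B - 1)"
      by (simp add: algebra_simps)
    also have "\<dots> = e ^ A * (of_nat B * e ^ (B - 1)) + e ^ B * (of_nat A * e ^ (A - 1))"
      by (subst p1, subst p2) (simp add: algebra_simps)
    finally show ?thesis by simp
  qed
qed

lemma psi_zero:
  fixes h :: gen and e :: "'k::field"
  assumes we: "\<And>w. word_eval \<delta> \<mu> w = (if h \<in> set w then 0 else e ^ length w)"
      and rels: "\<And>r v. r \<in> {du_rel1 \<alpha> 0 \<gamma>, du_rel2 \<alpha> 0 \<gamma>} \<Longrightarrow> h \<notin> set v \<Longrightarrow> r v = 0"
      and s: "s \<in> tor1_boundaries \<alpha> 0 \<gamma> \<delta> \<mu> \<delta> \<mu>"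
  shows "lf (\<lambda>w. if h \<in> set w then 0 else of_nat (length w) * e ^ (length w - 1)) s = 0"
proof (rule S_lf_zero[OF _ _ s])
  let ?D = "\<lambda>w. if h \<in> set w then 0 else of_nat (length w) * e ^ (length w - 1)"
  fix a b
  show "lf ?D (bar_bd \<delta> \<mu> \<delta> \<mu> a b) = 0"
    unfolding lf_bar we using pow_id[of e "length a" "length b"] by (auto simp: algebra_simps)
next
  let ?D = "\<lambda>w. if h \<in> set w then 0 else of_nat (length w) * e ^ (length w - 1)"
  fix a b r assume r: "r \<in> {du_rel1 \<alpha> 0 \<gamma>, du_rel2 \<alpha> 0 \<gamma>}"
  show "lf ?D (gmul a r b) = 0"
    unfolding lf_def
  proof (rule sum.neutral, rule ballI)
    fix w assume "w \<in> {w. gmul a r b w \<noteq> 0}"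
    then obtain v where v: "w = a @ v @ b" "r v \<noteq> 0" using gmul_nz by blast
    show "gmul a r b w * ?D w = 0"
    proof (cases "h \<in> set w")
      case True then show ?thesis by simp
    next
      case False
      then have "h \<notin> set v" using v by simp
      then show ?thesis using rels[OF r] v by simp
    qed
  qed
qed

lemma notPc0:
  assumes "x \<in> K" "\<And>s. s \<in> S \<Longrightarrow> lf D s = 0" "lf D x \<noteq> 0"
  shows "\<not> Pc K S 0"
proof
  assume "Pc K S 0"
  then obtain v where "K \<subseteq> {(\<lambda>w. s w + fa_lincomb c v 0 w) | s c. s \<in> S}" unfolding Pc_def by blast
  then obtain s c where "s \<in> S" "x = (\<lambda>w. s w + fa_lincomb c v 0 w)" using assms(1) by blast
  then have "x = s" "s \<in> S" by (simp_all add: lincomb0)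
  then show False using assms by simp
qed

lemma lower1:
  fixes \<alpha> \<delta> \<mu> :: "'k::field"
  assumes a: "\<alpha> \<noteq> 1" and m: "one_dim_module \<alpha> 0 \<delta> \<mu>" and nz: "(\<delta>, \<mu>) \<noteq> (0, 0)"
  shows "fa_codim (tor1_cycles \<delta> \<mu> \<delta> \<mu>) (tor1_boundaries \<alpha> 0 0 \<delta> \<mu> \<delta> \<mu>) = 1"
proof -
  have a1: "1 - \<alpha> \<noteq> 0" using a by simp
  have "\<delta> * ((1 - \<alpha>) * \<delta> * \<mu>) = 0" "\<mu> * ((1 - \<alpha>) * \<delta> * \<mu>) = 0"
    using m by (simp_all add: one_dim_module_def)
  then have "(1 - \<alpha>) * \<delta> * \<mu> = 0" using nz by auto
  then have dm: "\<delta> * \<mu> = 0" using a1 by simp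
  show ?thesis
  proof (cases "\<delta> = 0")
    case False
    then have mu: "\<mu> = 0" using dm by simp
    have up: "Pc (tor1_cycles \<delta> \<mu> \<delta> \<mu>) (tor1_boundaries \<alpha> 0 0 \<delta> \<mu> \<delta> \<mu>) 1"
      by (rule up_E[OF E1_in]) (use False a1 in simp)
    let ?D = "\<lambda>w. if Ug \<in> set w then 0 else of_nat (length w) * \<delta> ^ (length w - 1)"
    have "\<not> Pc (tor1_cycles \<delta> \<mu> \<delta> \<mu>) (tor1_boundaries \<alpha> 0 0 \<delta> \<mu> \<delta> \<mu>) 0"
    proof (rule notPc0[OF mon_cycle[of "[Dg]"], where D="?D"])
      show "lf ?D s = 0" if "s \<in> tor1_boundaries \<alpha> 0 0 \<delta> \<mu> \<delta> \<mu>" for s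
        by (rule psi_zero[OF _ _ that]) (auto simp: mu we_mu0 du_rel1_def du_rel2_def fa_mon_def)
      show "lf ?D (fa_mon [Dg]) \<noteq> 0" by (simp add: lf_mon)
    qed
    then show ?thesis using codim_eq[OF up] by auto
  next
    case True
    then have mu: "\<mu> \<noteq> 0" using nz by simp
    have up: "Pc (tor1_cycles \<delta> \<mu> \<delta> \<mu>) (tor1_boundaries \<alpha> 0 0 \<delta> \<mu> \<delta> \<mu>) 1"
      by (rule up_E[OF E2_in]) (use mu a1 in simp)
    let ?D = "\<lambda>w. if Dg \<in> set w then 0 else of_nat (length w) * \<mu> ^ (length w - 1)"
    have "\<not> Pc (tor1_cycles \<delta> \<mu> \<delta> \<mu>) (tor1_boundaries \<alpha> 0 0 \<delta> \<mu> \<delta> \<mu>) 0"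
    proof (rule notPc0[OF mon_cycle[of "[Ug]"], where D="?D"])
      show "lf ?D s = 0" if "s \<in> tor1_boundaries \<alpha> 0 0 \<delta> \<mu> \<delta> \<mu>" for s
        by (rule psi_zero[OF _ _ that]) (auto simp: True we_delta0 du_rel1_def du_rel2_def fa_mon_def)
      show "lf ?D (fa_mon [Ug]) \<noteq> 0" by (simp add: lf_mon)
    qed
    then show ?thesis using codim_eq[OF up] by auto
  qed
qed


lemma upper_general:
  assumes m1: "one_dim_module \<alpha> \<gamma> d1 m1" and m2: "one_dim_module \<alpha> \<gamma> d2 m2"
  shows "tor1_dim \<alpha> \<gamma> d1 m1 d2 m2 \<le> 2"
proof (cases "d1 = d2 \<and> m1 = m2")
  case True
  then show ?thesis unfolding tor1_dim_def using codim_le[OF up_eq2] by auto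
next
  case False
  then show ?thesis unfolding tor1_dim_def using codim_le[OF up_ker[OF m1 m2 False]] by auto
qed

theorem lemma3p3:
  fixes \<alpha> \<gamma> \<delta>1 \<mu>1 \<delta>2 \<mu>2 :: "'k::field_char_0"
  assumes "one_dim_module \<alpha> \<gamma> \<delta>1 \<mu>1"
      and "one_dim_module \<alpha> \<gamma> \<delta>2 \<mu>2"
  shows "(\<gamma> \<noteq> 0 \<and> \<alpha> = 1 \<longrightarrow> tor1_dim \<alpha> \<gamma> \<delta>1 \<mu>1 \<delta>2 \<mu>2 = 0)
       \<and> (\<gamma> \<noteq> 0 \<and> \<alpha> \<noteq> 1 \<longrightarrow> tor1_dim \<alpha> \<gamma> \<delta>1 \<mu>1 \<delta>2 \<mu>2 \<le> 1)
       \<and> (\<gamma> = 0 \<longrightarrow>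
            tor1_dim \<alpha> \<gamma> \<delta>1 \<mu>1 \<delta>2 \<mu>2 \<le> 2
          \<and> tor1_dim \<alpha> \<gamma> 0 0 0 0 = 2
          \<and> (\<forall>\<delta> \<mu>. \<alpha> \<noteq> 1 \<and> one_dim_module \<alpha> \<gamma> \<delta> \<mu> \<and> (\<delta>, \<mu>) \<noteq> (0, 0)
                 \<longrightarrow> tor1_dim \<alpha> \<gamma> \<delta> \<mu> \<delta> \<mu> = 1))"
proof (intro conjI impI allI)
  assume h: "\<gamma> \<noteq> 0 \<and> \<alpha> = 1"
  then have z: "\<delta>1 = 0" "\<mu>1 = 0" "\<delta>2 = 0" "\<mu>2 = 0"
    using assms by (auto simp: one_dim_module_def)
  have E1: "(\<lambda>w. (-\<gamma>) * fa_mon [Dg] w) \<in> tor1_boundaries \<alpha> 0 \<gamma> 0 0 0 0"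
    using E1_in[of \<alpha> 0 0 \<gamma>] h by simp
  have E2: "(\<lambda>w. (-\<gamma>) * fa_mon [Ug] w) \<in> tor1_boundaries \<alpha> 0 \<gamma> 0 0 0 0"
    using E2_in[of \<alpha> 0 0 \<gamma>] h by simp
  have "Pc (tor1_cycles 0 0 0 0) (tor1_boundaries \<alpha> 0 \<gamma> 0 0 0 0) 0"
    by (rule up_zero[OF E1 E2]) (use h in simp_all)
  then have "fa_codim (tor1_cycles 0 0 0 0) (tor1_boundaries \<alpha> 0 \<gamma> 0 0 0 0) \<le> 0" by (rule codim_le)
  then show "tor1_dim \<alpha> \<gamma> \<delta>1 \<mu>1 \<delta>2 \<mu>2 = 0"
    unfolding tor1_dim_def z by simp
next
  assume h: "\<gamma> \<noteq> 0 \<and> \<alpha> \<noteq> 1"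
  show "tor1_dim \<alpha> \<gamma> \<delta>1 \<mu>1 \<delta>2 \<mu>2 \<le> 1"
  proof (cases "\<delta>1 = \<delta>2 \<and> \<mu>1 = \<mu>2")
    case False
    then show ?thesis unfolding tor1_dim_def using codim_le[OF up_ker[OF assms False]] by auto
  next
    case True
    then have e: "\<delta>2 = \<delta>1" "\<mu>2 = \<mu>1" by auto
    have "(1-\<alpha>)*(2*\<delta>1*\<mu>1) - \<gamma> \<noteq> 0"
    proof (cases "(1 - \<alpha>) * \<delta>1 * \<mu>1 = \<gamma>")
      case True
      have "(1-\<alpha>)*(2*\<delta>1*\<mu>1) - \<gamma> = 2*((1-\<alpha>)*\<delta>1*\<mu>1) - \<gamma>" by (simp add: algebra_simps)
      also have "\<dots> = \<gamma>" using True by simp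
      finally have "(1-\<alpha>)*(2*\<delta>1*\<mu>1) - \<gamma> = \<gamma>" .
      then show ?thesis using h by metis
    next
      case False
      then have "\<delta>1 = 0" "\<mu>1 = 0" using assms(1) by (auto simp: one_dim_module_def)
      then show ?thesis using h by simp
    qed
    then have "Pc (tor1_cycles \<delta>1 \<mu>1 \<delta>1 \<mu>1) (tor1_boundaries \<alpha> 0 \<gamma> \<delta>1 \<mu>1 \<delta>1 \<mu>1) 1"
      by (intro up_E[OF E1_in]) simp
    then show ?thesis unfolding tor1_dim_def e using codim_le by blast
  qed
next
  assume "\<gamma> = 0"
  show "tor1_dim \<alpha> \<gamma> \<delta>1 \<mu>1 \<delta>2 \<mu>2 \<le> 2" by (rule upper_general[OF assms])
next
  assume g: "\<gamma> = 0"
  show "tor1_dim \<alpha> \<gamma> 0 0 0 0 = 2" unfolding tor1_dim_def g by (rule lower2)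
next
  fix \<delta> \<mu> assume g: "\<gamma> = 0"
    and h: "\<alpha> \<noteq> 1 \<and> one_dim_module \<alpha> \<gamma> \<delta> \<mu> \<and> (\<delta>, \<mu>) \<noteq> (0, 0)"
  show "tor1_dim \<alpha> \<gamma> \<delta> \<mu> \<delta> \<mu> = 1"
    unfolding tor1_dim_def g by (rule lower1) (use h g in auto)
qed

end
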